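(* Consider the two-station pricing game described in the context, and assume that for each $i\in\{1,2\}$ (with $j\ne i$): $\mathcal{B}_i$ is monotonically increasing (non-decreasing) on $[p_{\min},p_{\max}]$; $p_j\mapsto\mathcal{B}_i(p_j)-p_j$ is strictly decreasing on $[p_{\min},p_{\max}]$; and $\mathcal{B}_i(\mathcal{B}_j(p_{\min}))\ge p_{\min}$, $\mathcal{B}_i(\mathcal{B}_j(p_{\max}))\le p_{\max}$. Let $(p_1^*,p_2^* )$ be the (unique) pure-strategy pricing equilibrium, and for $i\ne j$ let $\Theta_i(p_i)=\mathcal{B}_i(\mathcal{B}_j(p_i))-p_i$. Then for every $p_i\in[p_{\min},p_{\max}]$: $\Theta_i(p_i)<0$ if $p_i>p_i^*$, and $\Theta_i(p_i)>0$ if $p_i<p_i^*$.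
   Context: Two charging stations $i\in\{1,2\}$ simultaneously choose prices $p_i\in[p_{\min},p_{\max}]$. Station $i$'s payoff is $Q_i(p_i,p_j)=(p_i-c_i)D_i(p_i,p_j)-\check c_i$ ($j\ne i$), where $c_i\le p_{\min}$ is its unit electricity cost, $\check c_i$ a fixed cost, and $D_i(p_i,p_j)$ the demand it receives from the PEVs' station-selection equilibrium under prices $(p_i,p_j)$. A best-response function of station $i$ is a function $\mathcal{B}_i:[p_{\min},p_{\max}]\to[p_{\min},p_{\max}]$ with $\mathcal{B}_i(p_j)\in\arg\max_{p_i\in[p_{\min},p_{\max}]}Q_i(p_i,p_j)$. A pure-strategy pricing equilibrium is a pair $(p_1^*,p_2^* )$ with $p_1^*=\mathcal{B}_1(p_2^* )$ and $p_2^*=\mathcal{B}_2(p_1^* )$. *)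

theory Defs
  imports Complex_Main
begin

text \<open>Payoff of a station: Q(p_i,p_j) = (p_i - c) * D(p_i,p_j) - cfix,
  where D(p_i,p_j) is the demand the station receives under prices (own, other).\<close>
definition payoff :: "real \<Rightarrow> real \<Rightarrow> (real \<Rightarrow> real \<Rightarrow> real) \<Rightarrow> real \<Rightarrow> real \<Rightarrow> real" where
  "payoff c cfix D p_own p_oth = (p_own - c) * D p_own p_oth - cfix"

definition is_best_response :: "real \<Rightarrow> real \<Rightarrow> (real \<Rightarrow> real \<Rightarrow> real) \<Rightarrow> (real \<Rightarrow> real) \<Rightarrow> bool" where
  "is_best_response pmin pmax Q B \<longleftrightarrow>
     (\<forall>p_oth\<in>{pmin..pmax}. B p_oth \<in> {pmin..pmax} \<and> (\<forall>p_own\<in>{pmin..pmax}. Q p_own p_oth \<le> Q (B p_oth) p_oth))"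

definition is_pricing_equilibrium :: "real \<Rightarrow> real \<Rightarrow> (real \<Rightarrow> real) \<Rightarrow> (real \<Rightarrow> real) \<Rightarrow> real \<Rightarrow> real \<Rightarrow> bool" where
  "is_pricing_equilibrium pmin pmax B1 B2 p1 p2 \<longleftrightarrow>
     p1 \<in> {pmin..pmax} \<and> p2 \<in> {pmin..pmax} \<and> p1 = B1 p2 \<and> p2 = B2 p1"

end

theory Submission
  imports Defs
begin

lemma theta_dec:
  fixes B C :: "real \<Rightarrow> real"
  assumes Cin: "\<And>x. x \<in> {pmin..pmax} \<Longrightarrow> C x \<in> {pmin..pmax}"
    and monoC: "mono_on {pmin..pmax} C"
    and sB: "\<And>x y. x \<in> {pmin..pmax} \<Longrightarrow> y \<in> {pmin..pmax} \<Longrightarrow> x < y \<Longrightarrow> B y - y < B x - x"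
    and sC: "\<And>x y. x \<in> {pmin..pmax} \<Longrightarrow> y \<in> {pmin..pmax} \<Longrightarrow> x < y \<Longrightarrow> C y - y < C x - x"
    and p: "p \<in> {pmin..pmax}" and q: "q \<in> {pmin..pmax}" and pq: "p < q"
  shows "B (C q) - q < B (C p) - p"
proof -
  have le: "C p \<le> C q" using monoC p q pq unfolding mono_on_def by (meson less_imp_le)
  have c: "C q - q < C p - p" using sC p q pq by blast
  show ?thesis
  proof (cases "C p = C q")
    case True then show ?thesis using pq by simp
  next
    case False
    then have "C p < C q" using le by simp
    then have "B (C q) - C q < B (C p) - C p" using sB Cin p q by blast
    then show ?thesis using c by linarith
  qed
qed

theorem proposition1:
  fixes pmin pmax c1 c2 cf1 cf2 p1s p2s :: real
    and D1 D2 :: "real \<Rightarrow> real \<Rightarrow> real"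
    and B1 B2 :: "real \<Rightarrow> real"
  assumes interval: "pmin \<le> pmax"
    and costs: "c1 \<le> pmin" "c2 \<le> pmin"
    and br1: "is_best_response pmin pmax (payoff c1 cf1 D1) B1"
    and br2: "is_best_response pmin pmax (payoff c2 cf2 D2) B2"
    and mono1: "mono_on {pmin..pmax} B1"
    and mono2: "mono_on {pmin..pmax} B2"
    and sdec1: "\<And>x y. x \<in> {pmin..pmax} \<Longrightarrow> y \<in> {pmin..pmax} \<Longrightarrow> x < y \<Longrightarrow> B1 y - y < B1 x - x"
    and sdec2: "\<And>x y. x \<in> {pmin..pmax} \<Longrightarrow> y \<in> {pmin..pmax} \<Longrightarrow> x < y \<Longrightarrow> B2 y - y < B2 x - x"
    and bnd1: "B1 (B2 pmin) \<ge> pmin" "B1 (B2 pmax) \<le> pmax"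
    and bnd2: "B2 (B1 pmin) \<ge> pmin" "B2 (B1 pmax) \<le> pmax"
    and eq: "is_pricing_equilibrium pmin pmax B1 B2 p1s p2s"
  shows "\<forall>p\<in>{pmin..pmax}.
           (p > p1s \<longrightarrow> B1 (B2 p) - p < 0) \<and> (p < p1s \<longrightarrow> B1 (B2 p) - p > 0) \<and>
           (p > p2s \<longrightarrow> B2 (B1 p) - p < 0) \<and> (p < p2s \<longrightarrow> B2 (B1 p) - p > 0)"
proof -
  have in1: "\<And>x. x \<in> {pmin..pmax} \<Longrightarrow> B1 x \<in> {pmin..pmax}" using br1 unfolding is_best_response_def by blast
  have in2: "\<And>x. x \<in> {pmin..pmax} \<Longrightarrow> B2 x \<in> {pmin..pmax}" using br2 unfolding is_best_response_def by blast
  have e: "p1s \<in> {pmin..pmax}" "p2s \<in> {pmin..pmax}" "p1s = B1 p2s" "p2s = B2 p1s"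
    using eq unfolding is_pricing_equilibrium_def by blast+
  have t1: "B1 (B2 q) - q < B1 (B2 p) - p" if "p \<in> {pmin..pmax}" "q \<in> {pmin..pmax}" "p < q" for p q
    using theta_dec[OF in2 mono2 sdec1 sdec2 that] by blast
  have t2: "B2 (B1 q) - q < B2 (B1 p) - p" if "p \<in> {pmin..pmax}" "q \<in> {pmin..pmax}" "p < q" for p q
    using theta_dec[OF in1 mono1 sdec2 sdec1 that] by blast
  show ?thesis
  proof (intro ballI conjI impI)
    fix p assume p: "p \<in> {pmin..pmax}"
    have z1: "B1 (B2 p1s) - p1s = 0" using e(3)[symmetric] e(4)[symmetric] by (simp only: diff_self)
    have z2: "B2 (B1 p2s) - p2s = 0" using e(3)[symmetric] e(4)[symmetric] by (simp only: diff_self)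
    { assume "p > p1s" then show "B1 (B2 p) - p < 0" using t1[OF e(1) p] z1 by linarith }
    { assume "p < p1s" then show "B1 (B2 p) - p > 0" using t1[OF p e(1)] z1 by linarith }
    { assume "p > p2s" then show "B2 (B1 p) - p < 0" using t2[OF e(2) p] z2 by linarith }
    { assume "p < p2s" then show "B2 (B1 p) - p > 0" using t2[OF p e(2)] z2 by linarith }
  qed
qed

end
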